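(* Let $M$ be any matroid that is representable over $\mathbb{Q}$. Then there exists an integer $N\ge 1$ such that $M$ is isomorphic to a minor of the matroid $M(\mathcal{A}_N)$ underlying the resonance arrangement $\mathcal{A}_N$. Equivalently, every hyperplane arrangement $\mathcal{B}$ defined over $\mathbb{Q}$ arises (up to isomorphism of the underlying matroids) from $\mathcal{A}_N$, for some large enough $N$, by a finite sequence of restriction and contraction steps.
   Context: For $n\ge1$, the resonance arrangement $\mathcal{A}_n$ is the arrangement in $\mathbb{R}^n$ (or $\mathbb{Q}^n$) consisting of the hyperplanes $H_I=\{x:\sum_{i\in I}x_i=0\}$ for all nonempty $I\subseteq[n]$; equivalently its normal vectors are all nonzero $0/1$-vectors $\chi_I$ in $\mathbb{R}^n$. The matroid $M(\mathcal{A}_n)$ has ground set $\mathcal{A}_n$ and a subset is independent iff the corresponding normal vectors $\chi_I$ are linearly independent. A matroid is representable over $\mathbb{Q}$ if it equals the matroid of linearly independent column subsets of some matrix over $\mathbb{Q}$; a matroid of an arrangement is the matroid of its normal vectors. For a matroid $M=(E,\mathcal{I})$ and $S\subseteq E$: the restriction $M|S$ has ground set $S$ and independent sets $\{I\in\mathcal{I}: I\subseteq S\}$; if $S$ is independent, the contraction $M/S$ has ground set $E\setminus S$ and independent sets $\{I\subseteq E\setminus S: I\cup S\in\mathcal{I}\}$. A minor of $M$ is any matroid obtained from $M$ by a finite sequence of restrictions and contractions. *)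

theory Defs
  imports Complex_Main
begin

type_synonym 'a matroid = "'a set \<times> ('a set \<Rightarrow> bool)"

text \<open>Linear independence over Q of the family (v e) for e in S (as a family, so
  repeated vectors are dependent). Vectors in Q^m are functions nat => rat.\<close>
definition lin_indep_fam :: "('a \<Rightarrow> nat \<Rightarrow> rat) \<Rightarrow> 'a set \<Rightarrow> bool" where
  "lin_indep_fam v S \<longleftrightarrow> finite S \<and>
     (\<forall>c :: 'a \<Rightarrow> rat. (\<forall>i. (\<Sum>e\<in>S. c e * v e i) = 0) \<longrightarrow> (\<forall>e\<in>S. c e = 0))"

definition representable_Q :: "'a matroid \<Rightarrow> bool" where
  "representable_Q M \<longleftrightarrow> finite (fst M) \<and>
     (\<exists>(v :: 'a \<Rightarrow> nat \<Rightarrow> rat) (m :: nat).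
        (\<forall>e\<in>fst M. \<forall>i. m \<le> i \<longrightarrow> v e i = 0) \<and>
        (\<forall>S. snd M S \<longleftrightarrow> S \<subseteq> fst M \<and> lin_indep_fam v S))"

definition chi :: "nat set \<Rightarrow> nat \<Rightarrow> rat" where
  "chi I i = (if i \<in> I then 1 else 0)"

text \<open>The matroid of the resonance arrangement A_n: hyperplanes H_I are identified
  with nonempty I subseteq {1..n}; normal vector chi I.\<close>
definition resonance_matroid :: "nat \<Rightarrow> nat set matroid" where
  "resonance_matroid n =
     ({I. I \<subseteq> {1..n} \<and> I \<noteq> {}},
      \<lambda>S. S \<subseteq> {I. I \<subseteq> {1..n} \<and> I \<noteq> {}} \<and> lin_indep_fam chi S)"

definition restriction :: "'a matroid \<Rightarrow> 'a set \<Rightarrow> 'a matroid" where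
  "restriction M S = (S, \<lambda>I. snd M I \<and> I \<subseteq> S)"

definition contraction :: "'a matroid \<Rightarrow> 'a set \<Rightarrow> 'a matroid" where
  "contraction M S = (fst M - S, \<lambda>I. I \<subseteq> fst M - S \<and> snd M (I \<union> S))"

inductive is_minor :: "'a matroid \<Rightarrow> 'a matroid \<Rightarrow> bool" where
  self: "is_minor M M"
| restr: "is_minor N M \<Longrightarrow> S \<subseteq> fst N \<Longrightarrow> is_minor (restriction N S) M"
| contr: "is_minor N M \<Longrightarrow> snd N S \<Longrightarrow> is_minor (contraction N S) M"

definition matroid_iso :: "'a matroid \<Rightarrow> 'b matroid \<Rightarrow> bool" where
  "matroid_iso M M' \<longleftrightarrow> (\<exists>f. bij_betw f (fst M) (fst M') \<and>
      (\<forall>S. S \<subseteq> fst M \<longrightarrow> (snd M S \<longleftrightarrow> snd M' (f ` S))))"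

end

theory Submission
  imports Defs "HOL-Library.Countable"
begin

datatype lab = R nat | Dp nat nat | Dn nat nat | Z nat | Z' nat

instance lab :: countable by countable_datatype

definition code :: "lab \<Rightarrow> nat" where "code l = Suc (to_nat l)"

lemma code_inj: "code a = code b \<longleftrightarrow> a = b" by (simp add: code_def)

lemma inj_code: "inj code" by (simp add: inj_def code_inj)

lemma chi_code: "chi (code ` A) (code l) = (if l \<in> A then 1 else 0)"
  by (simp add: chi_def inj_image_mem_iff[OF inj_code])

lemma chi_notrange: "j \<notin> range code \<Longrightarrow> chi (code ` A) j = 0"
  by (auto simp: chi_def)

fun sset :: "lab \<Rightarrow> lab set" where
  "sset (Z j) = {Z j}"
| "sset (Z' j) = {Z' j}"
| "sset (Dp i k) = {Dp i k, R i}"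
| "sset (Dn i k) = {Dn i k, Dp i k}"
| "sset (R i) = {R i}"

lemma inj_sset: "inj sset"
  unfolding inj_def
  apply (intro allI impI)
  subgoal for x y by (cases x; cases y; auto simp: doubleton_eq_iff)
  done

definition SS :: "lab \<Rightarrow> nat set" where "SS l = code ` sset l"

lemma inj_SS: "inj SS"
  unfolding SS_def inj_def
  by (metis inj_image_eq_iff inj_code inj_sset injD)

lemma sum_ind: "a \<le> K \<Longrightarrow> (\<Sum>k<K. (if k < a then 1 else 0 :: rat)) = of_nat a"
proof -
  assume "a \<le> K"
  have "(\<Sum>k<K. (if k < a then 1 else 0 :: rat)) = (\<Sum>k\<in>{k. k<K \<and> k < a}. 1)"
    by (simp add: sum.If_cases Int_def lessThan_def)
  also have "{k. k<K \<and> k < a} = {..<a}" using \<open>a \<le> K\<close> by auto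
  finally show ?thesis by simp
qed

locale cons =
  fixes E :: "'a set" and idx :: "'a \<Rightarrow> nat" and W :: "'a \<Rightarrow> nat \<Rightarrow> int" and m K :: nat
  assumes finE: "finite E" and inj_idx: "inj_on idx E"
    and Wb1: "\<And>e i. e \<in> E \<Longrightarrow> nat (W e i) \<le> K"
    and Wb2: "\<And>e i. e \<in> E \<Longrightarrow> nat (- W e i) \<le> K"
    and Wzero: "\<And>e i. e \<in> E \<Longrightarrow> m \<le> i \<Longrightarrow> W e i = 0"
begin

definition B :: "'a \<Rightarrow> lab set" where
  "B e = {Z (idx e), Z' (idx e)} \<union> {Dp i k | i k. i < m \<and> k < nat (W e i)}
     \<union> {Dn i k | i k. i < m \<and> k < nat (- W e i)}"

definition G :: "'a \<Rightarrow> nat set" where "G e = code ` B e"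

definition P :: "lab set" where
  "P = Z ` (idx ` E) \<union> Z' ` (idx ` E) \<union> {Dp i k | i k. i < m \<and> k < K}
     \<union> {Dn i k | i k. i < m \<and> k < K}"

definition L :: "(nat \<Rightarrow> rat) \<Rightarrow> nat \<Rightarrow> rat" where
  "L x i = (\<Sum>k<K. x (code (Dp i k))) - (\<Sum>k<K. x (code (Dn i k))) - x (code (R i))"

definition w :: "'a \<Rightarrow> nat \<Rightarrow> rat" where "w e i = of_int (W e i)"

lemma finP: "finite P"
proof -
  have "{Dp i k | i k. i < m \<and> k < K} = (\<lambda>(i,k). Dp i k) ` ({..<m} \<times> {..<K})" by auto
  moreover have "{Dn i k | i k. i < m \<and> k < K} = (\<lambda>(i,k). Dn i k) ` ({..<m} \<times> {..<K})" by auto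
  ultimately show ?thesis unfolding P_def using finE by simp
qed

lemma B_sub: "e \<in> E \<Longrightarrow> B e \<subseteq> P"
  unfolding B_def P_def using Wb1[of e] Wb2[of e] by (auto; meson order_less_le_trans)

lemma L_lin: "L (\<lambda>j. \<Sum>t\<in>F. b t * f t j) i = (\<Sum>t\<in>F. b t * L (f t) i)"
  unfolding L_def
  by (simp add: sum.swap[of _ F] sum_distrib_left right_diff_distrib sum_subtractf)

lemma L_add: "L (\<lambda>j. f j + g j) i = L f i + L g i"
  unfolding L_def by (simp add: sum.distrib)

lemma L_G: "e \<in> E \<Longrightarrow> L (chi (G e)) i = w e i"
proof -
  assume e: "e \<in> E"
  have 1: "(\<Sum>k<K. chi (G e) (code (Dp i k))) = (\<Sum>k<K. if k < (if i < m then nat (W e i) else 0) then 1 else 0)"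
    unfolding G_def chi_code by (intro sum.cong) (auto simp: B_def)
  have 2: "(\<Sum>k<K. chi (G e) (code (Dn i k))) = (\<Sum>k<K. if k < (if i < m then nat (- W e i) else 0) then 1 else 0)"
    unfolding G_def chi_code by (intro sum.cong) (auto simp: B_def)
  have 3: "chi (G e) (code (R i)) = 0" unfolding G_def chi_code by (auto simp: B_def)
  show ?thesis unfolding L_def 1 2 3 w_def
    using Wb1[OF e, of i] Wb2[OF e, of i] Wzero[OF e, of i]
    by (cases "i < m") (simp_all add: sum_ind)
qed

lemma L_SS: "l \<in> P \<Longrightarrow> L (chi (SS l)) i = 0"
proof -
  assume l: "l \<in> P"
  have c1: "(\<Sum>k<K. chi (SS l) (code (Dp i k))) = (\<Sum>k\<in>{k. k<K \<and> Dp i k \<in> sset l}. 1)"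
    unfolding SS_def chi_code by (simp add: sum.If_cases Int_def lessThan_def)
  have c2: "(\<Sum>k<K. chi (SS l) (code (Dn i k))) = (\<Sum>k\<in>{k. k<K \<and> Dn i k \<in> sset l}. 1)"
    unfolding SS_def chi_code by (simp add: sum.If_cases Int_def lessThan_def)
  show ?thesis
  proof (cases l)
    case (R x1)
    then show ?thesis using l by (auto simp: P_def)
  next
    case (Dp a b)
    then have "{k. k<K \<and> Dp i k \<in> sset l} = (if i = a then {b} else {})"
      "{k. k<K \<and> Dn i k \<in> sset l} = {}" using l by (auto simp: P_def)
    then show ?thesis unfolding L_def c1 c2 using Dp by (simp add: SS_def chi_def code_inj)
  next
    case (Dn a b)
    then have "{k. k<K \<and> Dp i k \<in> sset l} = (if i = a then {b} else {})"
      "{k. k<K \<and> Dn i k \<in> sset l} = (if i = a then {b} else {})" using l by (auto simp: P_def)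
    then show ?thesis unfolding L_def c1 c2 using Dn by (simp add: SS_def chi_def code_inj)
  next
    case (Z x4)
    then show ?thesis unfolding L_def c1 c2 by (simp add: SS_def chi_def code_inj)
  next
    case (Z' x5)
    then show ?thesis unfolding L_def c1 c2 by (simp add: SS_def chi_def code_inj)
  qed
qed

lemma sumP: "(\<Sum>l\<in>P. a l * chi (SS l) (code l0)) = (\<Sum>l\<in>{l\<in>P. l0 \<in> sset l}. a l)"
  unfolding SS_def chi_code by (simp add: sum.inter_filter[OF finP] if_distrib cong: if_cong)

lemma fZ: "{l\<in>P. Z j \<in> sset l} = (if j \<in> idx ` E then {Z j} else {})"
  by (rule set_eqI, case_tac x) (auto simp: P_def)
lemma fZ': "{l\<in>P. Z' j \<in> sset l} = (if j \<in> idx ` E then {Z' j} else {})"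
  by (rule set_eqI, case_tac x) (auto simp: P_def)
lemma fDn: "{l\<in>P. Dn i k \<in> sset l} = (if i < m \<and> k < K then {Dn i k} else {})"
  by (rule set_eqI, case_tac x) (auto simp: P_def)
lemma fDp: "{l\<in>P. Dp i k \<in> sset l} = (if i < m \<and> k < K then {Dp i k, Dn i k} else {})"
  by (rule set_eqI, case_tac x) (auto simp: P_def)
lemma fR: "{l\<in>P. R i \<in> sset l} = (if i < m then Dp i ` {..<K} else {})"
  by (rule set_eqI, case_tac x) (auto simp: P_def)

lemma S_indep:
  assumes h: "\<And>j. (\<Sum>l\<in>P. a l * chi (SS l) j) = 0" and l: "l \<in> P"
  shows "a l = 0"
proof -
  have n: "a (Dn i k) = 0" if "i < m" "k < K" for i k
    using h[of "code (Dn i k)"] that unfolding sumP fDn by simp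
  have p: "a (Dp i k) = 0" if "i < m" "k < K" for i k
    using h[of "code (Dp i k)"] that n[OF that] unfolding sumP fDp by simp
  have z: "a (Z j) = 0" if "j \<in> idx ` E" for j
    using h[of "code (Z j)"] that unfolding sumP fZ by simp
  have z': "a (Z' j) = 0" if "j \<in> idx ` E" for j
    using h[of "code (Z' j)"] that unfolding sumP fZ' by simp
  show ?thesis using l n p z z' unfolding P_def by auto
qed

definition acoef :: "(nat \<Rightarrow> rat) \<Rightarrow> lab \<Rightarrow> rat" where
  "acoef x l = (case l of Dp i k \<Rightarrow> x (code (Dp i k)) - x (code (Dn i k)) | _ \<Rightarrow> x (code l))"

lemma kernel:
  assumes supp: "\<And>j. j \<notin> code ` (P \<union> R ` {..<m}) \<Longrightarrow> x j = 0"
    and Lx: "\<And>i. i < m \<Longrightarrow> L x i = 0"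
  shows "x j = (\<Sum>l\<in>P. acoef x l * chi (SS l) j)"
proof (cases "j \<in> range code")
  case False
  then show ?thesis using supp[of j] by (auto simp: SS_def chi_notrange)
next
  case True
  then obtain l0 where j: "j = code l0" by auto
  have out: "x (code l) = 0" if "l \<notin> P" "l \<notin> R ` {..<m}" for l
    using supp[of "code l"] that by (simp add: inj_image_mem_iff[OF inj_code])
  have "x (code l0) = (\<Sum>l\<in>{l\<in>P. l0 \<in> sset l}. acoef x l)"
  proof (cases l0)
    case (R i)
    show ?thesis
    proof (cases "i < m")
      case True
      have "(\<Sum>l\<in>Dp i ` {..<K}. acoef x l) = (\<Sum>k<K. acoef x (Dp i k))"
        by (simp add: sum.reindex inj_on_def)
      also have "\<dots> = (\<Sum>k<K. x (code (Dp i k))) - (\<Sum>k<K. x (code (Dn i k)))"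
        by (simp add: acoef_def sum_subtractf)
      also have "\<dots> = x (code (R i))" using Lx[OF True] by (simp add: L_def)
      finally show ?thesis using True R by (simp add: fR)
    next
      case False
      moreover have "R i \<notin> P" by (auto simp: P_def)
      ultimately show ?thesis using R out[of l0] by (auto simp: fR)
    qed
  next
    case (Dp i k)
    show ?thesis unfolding Dp fDp using out[of l0] Dp by (auto simp: acoef_def P_def)
  next
    case (Dn i k)
    show ?thesis unfolding Dn fDn using out[of l0] Dn by (auto simp: acoef_def P_def)
  next
    case (Z j)
    show ?thesis unfolding Z fZ using out[of l0] Z by (auto simp: acoef_def P_def)
  next
    case (Z' j)
    show ?thesis unfolding Z' fZ' using out[of l0] Z' by (auto simp: acoef_def P_def)
  qed
  then show ?thesis unfolding j sumP .
qed

lemma inj_G: "inj_on G E"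
proof (rule inj_onI)
  fix e e' assume e: "e \<in> E" "e' \<in> E" and h: "G e = G e'"
  then have "B e = B e'" unfolding G_def by (simp add: inj_image_eq_iff[OF inj_code])
  moreover have "Z (idx e) \<in> B e" by (simp add: B_def)
  ultimately have "Z (idx e) \<in> B e'" by simp
  then have "idx e = idx e'" by (auto simp: B_def)
  then show "e = e'" using inj_idx e by (auto dest: inj_onD)
qed

lemma G_notS: "G e \<notin> SS ` P"
proof
  assume "G e \<in> SS ` P"
  then obtain l where "G e = SS l" by auto
  then have h: "B e = sset l" unfolding G_def SS_def by (simp add: inj_image_eq_iff[OF inj_code])
  have "Z (idx e) \<in> sset l" "Z' (idx e) \<in> sset l" using h[symmetric] by (auto simp: B_def)
  then show False by (cases l) auto
qed

definition Indep2 :: "'a set \<Rightarrow> bool" where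
  "Indep2 T \<longleftrightarrow> (\<forall>c a. (\<forall>j. (\<Sum>e\<in>T. c e * chi (G e) j) + (\<Sum>l\<in>P. a l * chi (SS l) j) = 0)
      \<longrightarrow> (\<forall>e\<in>T. c e = 0) \<and> (\<forall>l\<in>P. a l = 0))"

lemma L_zero: "L (\<lambda>j. 0) i = 0" by (simp add: L_def)

lemma w_iff:
  assumes T: "T \<subseteq> E"
  shows "lin_indep_fam w T \<longleftrightarrow> Indep2 T"
proof
  assume li: "lin_indep_fam w T"
  show "Indep2 T" unfolding Indep2_def
  proof (intro allI impI)
    fix c :: "'a \<Rightarrow> rat" and a :: "lab \<Rightarrow> rat"
    assume H: "\<forall>j. (\<Sum>e\<in>T. c e * chi (G e) j) + (\<Sum>l\<in>P. a l * chi (SS l) j) = 0"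
    have fz: "(\<lambda>j. (\<Sum>e\<in>T. c e * chi (G e) j) + (\<Sum>l\<in>P. a l * chi (SS l) j)) = (\<lambda>j. 0)"
      using H by auto
    have "(\<Sum>e\<in>T. c e * w e i) = 0" for i
    proof -
      have "0 = L (\<lambda>j. (\<Sum>e\<in>T. c e * chi (G e) j) + (\<Sum>l\<in>P. a l * chi (SS l) j)) i"
        unfolding fz L_zero ..
      also have "\<dots> = (\<Sum>e\<in>T. c e * L (chi (G e)) i) + (\<Sum>l\<in>P. a l * L (chi (SS l)) i)"
        unfolding L_add L_lin ..
      also have "\<dots> = (\<Sum>e\<in>T. c e * w e i)"
        using T by (simp add: L_G L_SS subset_iff)
      finally show ?thesis by simp
    qed
    then have c0: "\<forall>e\<in>T. c e = 0" using li unfolding lin_indep_fam_def by blast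
    then have "(\<Sum>l\<in>P. a l * chi (SS l) j) = 0" for j using H by simp
    then have "\<forall>l\<in>P. a l = 0" using S_indep by blast
    with c0 show "(\<forall>e\<in>T. c e = 0) \<and> (\<forall>l\<in>P. a l = 0)" by blast
  qed
next
  assume I2: "Indep2 T"
  have finT: "finite T" using T finE finite_subset by blast
  show "lin_indep_fam w T" unfolding lin_indep_fam_def
  proof (intro conjI finT allI impI)
    fix c :: "'a \<Rightarrow> rat"
    assume Hc: "\<forall>i. (\<Sum>e\<in>T. c e * w e i) = 0"
    define x where "x = (\<lambda>j. \<Sum>e\<in>T. c e * chi (G e) j)"
    have supp: "x j = 0" if "j \<notin> code ` (P \<union> R ` {..<m})" for j
    proof -
      have "chi (G e) j = 0" if "e \<in> T" for e
      proof (cases "j \<in> range code")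
        case True
        then obtain l where l: "j = code l" by auto
        then have "l \<notin> P" using \<open>j \<notin> _\<close> by auto
        then have "l \<notin> B e" using B_sub[of e] \<open>e \<in> T\<close> T by auto
        then show ?thesis unfolding l G_def chi_code by simp
      next
        case False
        then show ?thesis unfolding G_def by (rule chi_notrange)
      qed
      then show ?thesis unfolding x_def by simp
    qed
    have Lx: "L x i = 0" for i
    proof -
      have "L x i = (\<Sum>e\<in>T. c e * L (chi (G e)) i)" unfolding x_def L_lin ..
      also have "\<dots> = (\<Sum>e\<in>T. c e * w e i)" using T by (simp add: L_G subset_iff)
      finally show ?thesis using Hc by simp
    qed
    have ker: "x j = (\<Sum>l\<in>P. acoef x l * chi (SS l) j)" for j
      by (rule kernel[OF supp Lx])
    have "\<forall>j. (\<Sum>e\<in>T. c e * chi (G e) j) + (\<Sum>l\<in>P. (- acoef x l) * chi (SS l) j) = 0"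
    proof
      fix j
      have "(\<Sum>l\<in>P. (- acoef x l) * chi (SS l) j) = - (\<Sum>l\<in>P. acoef x l * chi (SS l) j)"
        by (simp add: sum_negf)
      also have "\<dots> = - x j" using ker[of j] by simp
      finally have e1: "(\<Sum>l\<in>P. (- acoef x l) * chi (SS l) j) = - x j" .
      have e2: "(\<Sum>e\<in>T. c e * chi (G e) j) = x j" unfolding x_def ..
      show "(\<Sum>e\<in>T. c e * chi (G e) j) + (\<Sum>l\<in>P. (- acoef x l) * chi (SS l) j) = 0"
        unfolding e1 e2 by simp
    qed
    from mp[OF spec[OF spec[OF I2[unfolded Indep2_def], of c], of "\<lambda>l. - acoef x l"] this]
    show "\<forall>e\<in>T. c e = 0" by simp
  qed
qed

lemma sum_split:
  assumes T: "T \<subseteq> E"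
  shows "(\<Sum>A\<in>G ` T \<union> SS ` P. b A * chi A j) =
    (\<Sum>e\<in>T. b (G e) * chi (G e) j) + (\<Sum>l\<in>P. b (SS l) * chi (SS l) j)"
proof -
  have finT: "finite T" using T finE finite_subset by blast
  have injT: "inj_on G T" using inj_G T by (rule inj_on_subset)
  have disj: "G ` T \<inter> SS ` P = {}" using G_notS by blast
  have "(\<Sum>A\<in>G ` T \<union> SS ` P. b A * chi A j) = (\<Sum>A\<in>G ` T. b A * chi A j) + (\<Sum>A\<in>SS ` P. b A * chi A j)"
    using finT finP disj by (simp add: sum.union_disjoint)
  also have "\<dots> = (\<Sum>e\<in>T. b (G e) * chi (G e) j) + (\<Sum>l\<in>P. b (SS l) * chi (SS l) j)"
    using injT inj_SS by (simp add: sum.reindex inj_on_subset[of SS UNIV])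
  finally show ?thesis .
qed

lemma chi_iff:
  assumes T: "T \<subseteq> E"
  shows "lin_indep_fam chi (G ` T \<union> SS ` P) \<longleftrightarrow> Indep2 T"
proof
  assume li: "lin_indep_fam chi (G ` T \<union> SS ` P)"
  show "Indep2 T" unfolding Indep2_def
  proof (intro allI impI)
    fix c :: "'a \<Rightarrow> rat" and a :: "lab \<Rightarrow> rat"
    assume H: "\<forall>j. (\<Sum>e\<in>T. c e * chi (G e) j) + (\<Sum>l\<in>P. a l * chi (SS l) j) = 0"
    have injT: "inj_on G T" using inj_G T by (rule inj_on_subset)
    define b where "b A = (if A \<in> G ` T then c (inv_into T G A) else a (inv_into UNIV SS A))" for A
    have bG: "b (G e) = c e" if "e \<in> T" for e using that injT by (simp add: b_def)
    have bS: "b (SS l) = a l" if "l \<in> P" for l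
    proof -
      have "SS l \<notin> G ` T" using that G_notS by force
      then show ?thesis by (simp add: b_def inv_into_f_f[OF inj_SS])
    qed
    have "\<forall>j. (\<Sum>A\<in>G ` T \<union> SS ` P. b A * chi A j) = 0"
    proof
      fix j
      have "(\<Sum>e\<in>T. b (G e) * chi (G e) j) = (\<Sum>e\<in>T. c e * chi (G e) j)"
        by (rule sum.cong) (simp_all add: bG)
      moreover have "(\<Sum>l\<in>P. b (SS l) * chi (SS l) j) = (\<Sum>l\<in>P. a l * chi (SS l) j)"
        by (rule sum.cong) (simp_all add: bS)
      ultimately show "(\<Sum>A\<in>G ` T \<union> SS ` P. b A * chi A j) = 0"
        unfolding sum_split[OF T] using H by simp
    qed
    then have "\<forall>A\<in>G ` T \<union> SS ` P. b A = 0" using li unfolding lin_indep_fam_def by blast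
    then show "(\<forall>e\<in>T. c e = 0) \<and> (\<forall>l\<in>P. a l = 0)" using bG bS by (metis UnCI image_eqI)
  qed
next
  assume I2: "Indep2 T"
  have finT: "finite T" using T finE finite_subset by blast
  show "lin_indep_fam chi (G ` T \<union> SS ` P)" unfolding lin_indep_fam_def
  proof (intro conjI allI impI)
    show "finite (G ` T \<union> SS ` P)" using finT finP by simp
  next
    fix b :: "nat set \<Rightarrow> rat"
    assume H: "\<forall>j. (\<Sum>A\<in>G ` T \<union> SS ` P. b A * chi A j) = 0"
    then have "\<forall>j. (\<Sum>e\<in>T. b (G e) * chi (G e) j) + (\<Sum>l\<in>P. b (SS l) * chi (SS l) j) = 0"
      unfolding sum_split[OF T] .
    from mp[OF spec[OF spec[OF I2[unfolded Indep2_def], of "\<lambda>e. b (G e)"], of "\<lambda>l. b (SS l)"] this]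
    have "(\<forall>e\<in>T. b (G e) = 0) \<and> (\<forall>l\<in>P. b (SS l) = 0)" by simp
    then show "\<forall>A\<in>G ` T \<union> SS ` P. b A = 0" by auto
  qed
qed

end


lemma (in cons) sset_sub: "l \<in> P \<Longrightarrow> sset l \<subseteq> P \<union> R ` {..<m}"
  by (cases l) (auto simp: P_def)

lemma (in cons) S_indep_chi: "lin_indep_fam chi (SS ` P)"
proof -
  have "Indep2 {}" unfolding Indep2_def using S_indep by simp
  then show ?thesis using chi_iff[of "{}"] by simp
qed

lemma common_denom:
  fixes Q :: "rat set"
  assumes "finite Q"
  shows "\<exists>d::int. d > 0 \<and> (\<forall>q\<in>Q. \<exists>z::int. of_int d * q = of_int z)"
  using assms
proof (induction Q rule: finite_induct)
  case empty
  then show ?case by (intro exI[of _ 1]) simp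
next
  case (insert q Q)
  then obtain d where d: "d > 0" "\<forall>q\<in>Q. \<exists>z::int. of_int d * q = of_int z" by blast
  obtain n dd where qd: "quotient_of q = (n, dd)" by (cases "quotient_of q")
  have dd: "dd > 0" using quotient_of_denom_pos[OF qd] .
  have q: "q = of_int n / of_int dd" using quotient_of_div[OF qd] .
  show ?case
  proof (rule exI[of _ "d * dd"], intro conjI ballI)
    show "d * dd > 0" using d dd by simp
  next
    fix r assume r: "r \<in> insert q Q"
    show "\<exists>z::int. of_int (d * dd) * r = of_int z"
    proof (cases "r = q")
      case True
      then have "of_int (d * dd) * r = of_int (d * n)" using q dd by (simp add: field_simps)
      then show ?thesis by blast
    next
      case False
      then have "r \<in> Q" using r by simp
      then obtain z where "of_int d * r = of_int z" using d by blast
      then have "of_int (d * dd) * r = of_int (dd * z)" by (simp add: algebra_simps)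
      then show ?thesis by blast
    qed
  qed
qed

lemma scale_iff:
  assumes d: "\<And>e. e \<in> T \<Longrightarrow> d e \<noteq> 0" and wv: "\<And>e i. e \<in> T \<Longrightarrow> w e i = d e * v e i"
  shows "lin_indep_fam w T \<longleftrightarrow> lin_indep_fam v T"
proof
  assume li: "lin_indep_fam w T"
  show "lin_indep_fam v T" unfolding lin_indep_fam_def
  proof (intro conjI allI impI)
    show "finite T" using li by (simp add: lin_indep_fam_def)
  next
    fix c :: "'a \<Rightarrow> rat" assume H: "\<forall>i. (\<Sum>e\<in>T. c e * v e i) = 0"
    have "\<forall>i. (\<Sum>e\<in>T. (c e / d e) * w e i) = 0"
    proof
      fix i
      have "(\<Sum>e\<in>T. (c e / d e) * w e i) = (\<Sum>e\<in>T. c e * v e i)"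
        by (rule sum.cong) (simp_all add: wv d)
      then show "(\<Sum>e\<in>T. (c e / d e) * w e i) = 0" using H by simp
    qed
    from mp[OF spec[OF conjunct2[OF li[unfolded lin_indep_fam_def]], of "\<lambda>e. c e / d e"] this]
    have "\<forall>e\<in>T. c e / d e = 0" by simp
    then show "\<forall>e\<in>T. c e = 0" using d by simp
  qed
next
  assume li: "lin_indep_fam v T"
  show "lin_indep_fam w T" unfolding lin_indep_fam_def
  proof (intro conjI allI impI)
    show "finite T" using li by (simp add: lin_indep_fam_def)
  next
    fix c :: "'a \<Rightarrow> rat" assume H: "\<forall>i. (\<Sum>e\<in>T. c e * w e i) = 0"
    have "\<forall>i. (\<Sum>e\<in>T. (c e * d e) * v e i) = 0"
    proof
      fix i
      have "(\<Sum>e\<in>T. (c e * d e) * v e i) = (\<Sum>e\<in>T. c e * w e i)"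
        by (rule sum.cong) (simp_all add: wv)
      then show "(\<Sum>e\<in>T. (c e * d e) * v e i) = 0" using H by simp
    qed
    from mp[OF spec[OF conjunct2[OF li[unfolded lin_indep_fam_def]], of "\<lambda>e. c e * d e"] this]
    have "\<forall>e\<in>T. c e * d e = 0" by simp
    then show "\<forall>e\<in>T. c e = 0" using d by simp
  qed
qed

theorem theorem1p1:
  fixes M :: "'a matroid"
  assumes "representable_Q M"
  shows "\<exists>N::nat. N \<ge> 1 \<and> (\<exists>M'. is_minor M' (resonance_matroid N) \<and> matroid_iso M M')"
proof -
  define E where "E = fst M"
  obtain v :: "'a \<Rightarrow> nat \<Rightarrow> rat" and m where finE: "finite E"
    and vz: "\<And>e i. e \<in> E \<Longrightarrow> m \<le> i \<Longrightarrow> v e i = 0"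
    and indM: "\<And>S. snd M S \<longleftrightarrow> S \<subseteq> E \<and> lin_indep_fam v S"
    using assms unfolding representable_Q_def E_def by blast
  have "\<forall>e. \<exists>d::int. d > 0 \<and> (\<forall>q\<in>v e ` {..<m}. \<exists>z::int. of_int d * q = of_int z)"
    using common_denom[of "v _ ` {..<m}"] by blast
  from choice[OF this] obtain D :: "'a \<Rightarrow> int" where
    Dp: "\<And>e. D e > 0 \<and> (\<forall>q\<in>v e ` {..<m}. \<exists>z::int. of_int (D e) * q = of_int z)" by blast
  have "\<forall>e. \<exists>f::nat \<Rightarrow> int. \<forall>i. e \<in> E \<longrightarrow> of_int (f i) = of_int (D e) * v e i"
  proof
    fix e
    have "\<forall>i. \<exists>z::int. e \<in> E \<longrightarrow> of_int z = of_int (D e) * v e i"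
    proof
      fix i
      show "\<exists>z::int. e \<in> E \<longrightarrow> of_int z = of_int (D e) * v e i"
      proof (cases "i < m")
        case True
        then show ?thesis using Dp[of e] by (metis imageI lessThan_iff)
      next
        case False
        then show ?thesis using vz[of e i] by (intro exI[of _ 0]) simp
      qed
    qed
    from choice[OF this] show "\<exists>f::nat \<Rightarrow> int. \<forall>i. e \<in> E \<longrightarrow> of_int (f i) = of_int (D e) * v e i" .
  qed
  from choice[OF this] obtain W :: "'a \<Rightarrow> nat \<Rightarrow> int" where
    WD0: "\<And>e i. e \<in> E \<Longrightarrow> of_int (W e i) = of_int (D e) * v e i" by blast
  have WD: "of_int (W e i) = of_int (D e) * v e i" if "e \<in> E" for e i using WD0[OF that] .
  have Wz: "W e i = 0" if "e \<in> E" "m \<le> i" for e i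
  proof -
    have "(of_int (W e i) :: rat) = 0" using WD[OF that(1)] vz[OF that] by simp
    then show ?thesis by simp
  qed
  define K where "K = Max (insert 0 ((\<lambda>(e,i). nat \<bar>W e i\<bar>) ` (E \<times> {..<m})))"
  have Kb: "nat \<bar>W e i\<bar> \<le> K" if "e \<in> E" for e i
  proof (cases "i < m")
    case True
    then show ?thesis unfolding K_def using finE that
      by (intro Max_ge) (auto intro!: imageI)
  next
    case False
    then show ?thesis using Wz[OF that] by simp
  qed
  obtain idx :: "'a \<Rightarrow> nat" and n where "idx ` E = {i. i < n}" and inj_idx: "inj_on idx E"
    using finite_imp_inj_to_nat_seg[OF finE] by blast
  interpret C: cons E idx W m K
  proof
    show "finite E" by fact
    show "inj_on idx E" by fact
    show "nat (W e i) \<le> K" if "e \<in> E" for e i using Kb[OF that, of i] by simp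
    show "nat (- W e i) \<le> K" if "e \<in> E" for e i using Kb[OF that, of i] by simp
    show "W e i = 0" if "e \<in> E" "m \<le> i" for e i using Wz that by simp
  qed
  define U where "U = C.P \<union> R ` {..<m}"
  have finU: "finite U" unfolding U_def using C.finP by simp
  define N where "N = Max (insert 1 (code ` U))"
  have N1: "N \<ge> 1" unfolding N_def using finU by simp
  have codeU: "code ` A \<subseteq> {1..N}" if "A \<subseteq> U" for A
  proof
    fix j assume "j \<in> code ` A"
    then obtain l where l: "l \<in> A" "j = code l" by auto
    have "j \<le> N" unfolding N_def using finU l that by (intro Max_ge) auto
    moreover have "1 \<le> j" using l by (simp add: code_def)
    ultimately show "j \<in> {1..N}" by simp
  qed
  define S0 where "S0 = SS ` C.P"
  define ground where "ground = {I. I \<subseteq> {1..N} \<and> I \<noteq> {}}"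
  have fstres: "fst (resonance_matroid N) = ground" by (simp add: resonance_matroid_def ground_def)
  have sndres: "snd (resonance_matroid N) X \<longleftrightarrow> X \<subseteq> ground \<and> lin_indep_fam chi X" for X
    by (simp add: resonance_matroid_def ground_def)
  have S0g: "S0 \<subseteq> ground"
  proof
    fix A assume "A \<in> S0"
    then obtain l where l: "l \<in> C.P" "A = SS l" unfolding S0_def by auto
    have "SS l \<subseteq> {1..N}" unfolding SS_def using C.sset_sub[OF l(1)] by (intro codeU) (simp add: U_def)
    moreover have "SS l \<noteq> {}" unfolding SS_def by (cases l) auto
    ultimately show "A \<in> ground" using l by (simp add: ground_def)
  qed
  have Gg: "C.G e \<in> ground" if "e \<in> E" for e
  proof -
    have "C.G e \<subseteq> {1..N}" unfolding C.G_def using C.B_sub[OF that] by (intro codeU) (auto simp: U_def)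
    moreover have "C.G e \<noteq> {}" unfolding C.G_def C.B_def by simp
    ultimately show ?thesis by (simp add: ground_def)
  qed
  have indS0: "snd (resonance_matroid N) S0"
    using S0g C.S_indep_chi unfolding sndres S0_def by simp
  define M0 where "M0 = contraction (resonance_matroid N) S0"
  define M' where "M' = restriction M0 (C.G ` E)"
  have fstM0: "fst M0 = ground - S0" unfolding M0_def contraction_def fstres by simp
  have sub: "C.G ` E \<subseteq> fst M0" unfolding fstM0 S0_def using Gg C.G_notS by auto
  have minor: "is_minor M' (resonance_matroid N)"
    unfolding M'_def M0_def
    by (rule is_minor.restr[OF is_minor.contr[OF is_minor.self indS0]]) (use sub in \<open>simp add: M0_def\<close>)
  have iso: "matroid_iso M M'"
    unfolding matroid_iso_def
  proof (intro exI[of _ C.G] conjI allI impI)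
    show "bij_betw C.G (fst M) (fst M')"
      unfolding M'_def restriction_def E_def[symmetric] using C.inj_G by (simp add: inj_on_imp_bij_betw)
  next
    fix T assume T0: "T \<subseteq> fst M"
    then have T: "T \<subseteq> E" by (simp add: E_def)
    have "snd M' (C.G ` T) \<longleftrightarrow> lin_indep_fam chi (C.G ` T \<union> S0)"
    proof -
      have "C.G ` T \<subseteq> ground - S0" using sub T unfolding fstM0 by auto
      moreover have "C.G ` T \<union> S0 \<subseteq> ground" using S0g Gg T by auto
      ultimately show ?thesis
        unfolding M'_def M0_def restriction_def contraction_def sndres fstres using T by auto
    qed
    also have "\<dots> \<longleftrightarrow> C.Indep2 T" unfolding S0_def by (rule C.chi_iff[OF T])
    also have "\<dots> \<longleftrightarrow> lin_indep_fam C.w T" by (rule C.w_iff[OF T, symmetric])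
    also have "\<dots> \<longleftrightarrow> lin_indep_fam v T"
    proof (rule scale_iff[where d = "\<lambda>e. of_int (D e)"])
      show "of_int (D e) \<noteq> (0::rat)" if "e \<in> T" for e using Dp[of e] by simp
      show "C.w e i = of_int (D e) * v e i" if "e \<in> T" for e i
        using WD[of e i] that T by (auto simp: C.w_def)
    qed
    also have "\<dots> \<longleftrightarrow> snd M T" using indM T by simp
    finally show "snd M T \<longleftrightarrow> snd M' (C.G ` T)" by simp
  qed
  show ?thesis using N1 minor iso by blast
qed

end
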